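(* Let $n\in\{2,3\}$, $d\ge2$ and $\alpha\in(0,1)$. There exist $C>0$ and $k_0$ such that for all integers $k\ge k_0$ and all $\rho\in\mathcal D_k$, $$\Big\|W_\rho\sum_{i=2}^dW_\rho^2(\hat\Theta_i\,\cdot)\Big\|_*\le Ce^{-(1-\alpha)\frac{2\pi\rho}{dk}}\quad\text{and}\quad\Big\|W_\rho\sum_{i=2}^dW_\rho(\hat\Theta_i\,\cdot)\Big\|_*\le Ce^{-(1-\alpha)\frac{2\pi\rho}{dk}}.$$
   Context: $\Theta_\theta(x_1,x_2,x')=(x_1\cos\theta+x_2\sin\theta,\,-x_1\sin\theta+x_2\cos\theta,\,x')$ on $\mathbb R^n$; $\hat\Theta_i:=\Theta_{2\pi(i-1)/(dk)}$, $i=1,\dots,d$; $\xi_\ell:=\big(\cos\tfrac{2\pi(\ell-1)}{k},\sin\tfrac{2\pi(\ell-1)}{k},0,\dots,0\big)$, $\ell=1,\dots,k$; $\eta_{i\ell}:=\hat\Theta_i^{-1}\xi_\ell$. $U$ is the unique positive radial decaying solution of $-\Delta U+U=U^3$ in $\mathbb R^n$, and $W_\rho(x):=\sum_{h=1}^kU(x-\rho\xi_h)$. Fixed constants $0<r_1<r_2$ define $\mathcal D_k:=[r_1k\ln k,\,r_2k\ln k]$. $\|h\|_*:=\sup_{x\in\mathbb R^n}\big(\sum_{i=1}^d\sum_{j=1}^ke^{-\alpha|x-\rho\eta_{ij}|}\big)^{-1}|h(x)|$. *)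

theory Defs
  imports "HOL-Analysis.Analysis"
begin

text \<open>Euclidean space R^n is modelled as real^'n with a well-ordered finite index type;
  the first two coordinates x1, x2 are the two least indices.\<close>

definition ix1 :: "'n::{finite,wellorder}" where
  "ix1 = (LEAST i. True)"

definition ix2 :: "'n::{finite,wellorder}" where
  "ix2 = (LEAST i. i \<noteq> ix1)"

definition Rot :: "real \<Rightarrow> real^'n::{finite,wellorder} \<Rightarrow> real^'n::{finite,wellorder}" where
  "Rot \<theta> x = (\<chi> j. if j = ix1 then x$ix1 * cos \<theta> + x$ix2 * sin \<theta>
                    else if j = ix2 then - x$ix1 * sin \<theta> + x$ix2 * cos \<theta>
                    else x$j)"

definition ThetaHat :: "nat \<Rightarrow> nat \<Rightarrow> nat \<Rightarrow> real^'n::{finite,wellorder} \<Rightarrow> real^'n::{finite,wellorder}" where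
  "ThetaHat d k i = Rot (2 * pi * (real i - 1) / (real d * real k))"

definition xi :: "nat \<Rightarrow> nat \<Rightarrow> real^'n::{finite,wellorder}" where
  "xi k l = (\<chi> j. if j = ix1 then cos (2 * pi * (real l - 1) / real k)
                  else if j = ix2 then sin (2 * pi * (real l - 1) / real k)
                  else 0)"

text \<open>eta_{il} = hat Theta_i^{-1} xi_l; the inverse of Theta_theta is Theta_{-theta}.\<close>
definition eta :: "nat \<Rightarrow> nat \<Rightarrow> nat \<Rightarrow> nat \<Rightarrow> real^'n::{finite,wellorder}" where
  "eta d k i l = Rot (- (2 * pi * (real i - 1) / (real d * real k))) (xi k l)"

definition Wrho :: "(real^'n::{finite,wellorder} \<Rightarrow> real) \<Rightarrow> nat \<Rightarrow> real \<Rightarrow> real^'n::{finite,wellorder} \<Rightarrow> real" where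
  "Wrho U k \<rho> x = (\<Sum>h = 1..k. U (x - \<rho> *\<^sub>R xi k h))"

definition star_norm :: "nat \<Rightarrow> nat \<Rightarrow> real \<Rightarrow> real \<Rightarrow> (real^'n::{finite,wellorder} \<Rightarrow> real) \<Rightarrow> ereal" where
  "star_norm d k \<alpha> \<rho> h =
     (SUP x. ereal (\<bar>h x\<bar> / (\<Sum>i = 1..d. \<Sum>j = 1..k. exp (- \<alpha> * norm (x - \<rho> *\<^sub>R eta d k i j)))))"

definition Dk :: "real \<Rightarrow> real \<Rightarrow> nat \<Rightarrow> real set" where
  "Dk r1 r2 k = {r1 * real k * ln (real k) .. r2 * real k * ln (real k)}"

definition C2_with :: "('a::euclidean_space \<Rightarrow> real) \<Rightarrow> ('a \<Rightarrow> 'a \<Rightarrow>\<^sub>L real)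
     \<Rightarrow> ('a \<Rightarrow> 'a \<Rightarrow>\<^sub>L ('a \<Rightarrow>\<^sub>L real)) \<Rightarrow> bool" where
  "C2_with U DU DDU \<longleftrightarrow>
     (\<forall>x. (U has_derivative blinfun_apply (DU x)) (at x)) \<and>
     (\<forall>x. (DU has_derivative blinfun_apply (DDU x)) (at x)) \<and>
     continuous_on UNIV DDU"

definition laplacian_with :: "('a::euclidean_space \<Rightarrow> 'a \<Rightarrow>\<^sub>L ('a \<Rightarrow>\<^sub>L real)) \<Rightarrow> 'a \<Rightarrow> real" where
  "laplacian_with DDU x = (\<Sum>b\<in>Basis. blinfun_apply (blinfun_apply (DDU x) b) b)"

definition ground_state :: "('a::euclidean_space \<Rightarrow> real) \<Rightarrow> bool" where
  "ground_state U \<longleftrightarrow>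
     (\<exists>DU DDU. C2_with U DU DDU \<and> (\<forall>x. - laplacian_with DDU x + U x = U x ^ 3)) \<and>
     (\<forall>x. U x > 0) \<and>
     (\<forall>x y. norm x = norm y \<longrightarrow> U x = U y) \<and>
     (U \<longlongrightarrow> 0) at_infinity"

end

theory Submission
  imports Defs "HOL-Analysis.Analysis"
begin


lemma second_deriv_max:
  fixes g g' :: "real \<Rightarrow> real"
  assumes e: "e > 0" and d: "\<forall>t. \<bar>t\<bar> < e \<longrightarrow> (g has_real_derivative g' t) (at t)"
    and dd: "(g' has_real_derivative L) (at 0)"
    and mx: "\<forall>t. \<bar>t\<bar> < e \<longrightarrow> g t \<le> g 0"
  shows "L \<le> 0"
proof (rule ccontr)
  assume "\<not> L \<le> 0" hence L: "L > 0" by simp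
  have g0: "g' 0 = 0"
    by (rule DERIV_local_max[OF d[rule_format, of 0] e]) (use e mx in auto)
  obtain \<delta> where \<delta>: "\<delta> > 0" "\<forall>h>0. h < \<delta> \<longrightarrow> g' 0 < g' (0 + h)"
    using DERIV_pos_inc_right[OF dd L] by blast
  define h where "h = min \<delta> e / 2"
  have h: "0 < h" "h < \<delta>" "h < e" using \<delta> e by (auto simp: h_def)
  have "\<exists>z>0. z < h \<and> g h - g 0 = (h - 0) * g' z"
    by (rule MVT2) (use h d in auto)
  then obtain z where z: "0 < z" "z < h" "g h - g 0 = h * g' z" by auto
  have "g' z > 0" using \<delta>(2) z h g0 by force
  hence "h * g' z > 0" using z h by (simp add: mult_pos_pos)
  hence "g h > g 0" using z(3) by linarith
  moreover have "g h \<le> g 0" using mx h by auto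
  ultimately show False by linarith
qed

lemma phi_d1:
  fixes a c r t :: real
  assumes "r\<^sup>2 + 2*c*t + t\<^sup>2 > 0"
  shows "((\<lambda>t. exp (-a * sqrt (r\<^sup>2 + 2*c*t + t\<^sup>2))) has_real_derivative
     (-a * exp (-a * sqrt (r\<^sup>2 + 2*c*t + t\<^sup>2)) * ((c+t) / sqrt (r\<^sup>2 + 2*c*t + t\<^sup>2)))) (at t)"
  using assms
  apply (auto intro!: derivative_eq_intros)
  apply (auto simp: field_simps power2_eq_square)
  done

lemma phi_d2:
  fixes a c r :: real
  assumes r: "r > 0"
  shows "((\<lambda>t. -a * exp (-a * sqrt (r\<^sup>2 + 2*c*t + t\<^sup>2)) * ((c+t) / sqrt (r\<^sup>2 + 2*c*t + t\<^sup>2))) has_real_derivative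
     exp (-a*r) * (a\<^sup>2 * c\<^sup>2 / r\<^sup>2 - a * (r\<^sup>2 - c\<^sup>2) / r^3)) (at 0)"
proof -
  have s: "sqrt (r\<^sup>2) = r" using r by simp
  show ?thesis
  using r
  apply (auto intro!: derivative_eq_intros simp: s)
  apply (auto simp: field_simps power2_eq_square power3_eq_cube)
  done
qed


lemma DU_line:
  fixes DU :: "'a::euclidean_space \<Rightarrow> 'a \<Rightarrow>\<^sub>L real"
  assumes "\<forall>x. (U has_derivative blinfun_apply (DU x)) (at x)"
  shows "((\<lambda>t. U (x0 + t *\<^sub>R b)) has_real_derivative blinfun_apply (DU (x0 + t *\<^sub>R b)) b) (at t)"
proof -
  have l: "((\<lambda>t. x0 + t *\<^sub>R b) has_derivative (\<lambda>h. h *\<^sub>R b)) (at t)"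
    by (auto intro!: derivative_eq_intros)
  have "((\<lambda>t. U (x0 + t *\<^sub>R b)) has_derivative (\<lambda>h. blinfun_apply (DU (x0 + t *\<^sub>R b)) (h *\<^sub>R b))) (at t)"
    by (rule has_derivative_compose[OF l]) (use assms in auto)
  moreover have "(\<lambda>h. blinfun_apply (DU (x0 + t *\<^sub>R b)) (h *\<^sub>R b)) = (*) (blinfun_apply (DU (x0 + t *\<^sub>R b)) b)"
    by (auto simp: blinfun.scaleR_right)
  ultimately show ?thesis by (simp add: has_field_derivative_def)
qed

lemma DDU_line:
  fixes DU :: "'a::euclidean_space \<Rightarrow> 'a \<Rightarrow>\<^sub>L real"
  assumes "\<forall>x. (DU has_derivative blinfun_apply (DDU x)) (at x)"
  shows "((\<lambda>t. blinfun_apply (DU (x0 + t *\<^sub>R b)) b) has_real_derivative blinfun_apply (blinfun_apply (DDU (x0 + t *\<^sub>R b)) b) b) (at t)"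
proof -
  have l: "((\<lambda>t. x0 + t *\<^sub>R b) has_derivative (\<lambda>h. h *\<^sub>R b)) (at t)"
    by (auto intro!: derivative_eq_intros)
  have f: "((\<lambda>t. DU (x0 + t *\<^sub>R b)) has_derivative (\<lambda>h. blinfun_apply (DDU (x0 + t *\<^sub>R b)) (h *\<^sub>R b))) (at t)"
    by (rule has_derivative_compose[OF l]) (use assms in auto)
  have "((\<lambda>t. blinfun_apply (DU (x0 + t *\<^sub>R b)) ((\<lambda>_. b) t)) has_derivative
     (\<lambda>h. blinfun_apply (DU (x0 + t *\<^sub>R b)) ((\<lambda>_. 0) h) + blinfun_apply (blinfun_apply (DDU (x0 + t *\<^sub>R b)) (h *\<^sub>R b)) ((\<lambda>_. b) t))) (at t)"
    by (rule bounded_bilinear.FDERIV[OF bounded_bilinear_blinfun_apply f]) (rule has_derivative_const)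
  moreover have "(\<lambda>h. blinfun_apply (DU (x0 + t *\<^sub>R b)) ((\<lambda>_. 0) h) + blinfun_apply (blinfun_apply (DDU (x0 + t *\<^sub>R b)) (h *\<^sub>R b)) ((\<lambda>_. b) t))
      = (*) (blinfun_apply (blinfun_apply (DDU (x0 + t *\<^sub>R b)) b) b)"
    by (auto simp: blinfun.scaleR_right blinfun.zero_right blinfun.scaleR_left)
  ultimately show ?thesis by (simp add: has_field_derivative_def)
qed


lemma norm_line:
  fixes x0 b :: "'a::euclidean_space"
  assumes "b \<in> Basis"
  shows "norm (x0 + t *\<^sub>R b) = sqrt ((norm x0)\<^sup>2 + 2 * (x0 \<bullet> b) * t + t\<^sup>2)"
proof -
  have "(x0 + t *\<^sub>R b) \<bullet> (x0 + t *\<^sub>R b) = x0 \<bullet> x0 + 2 * (x0 \<bullet> b) * t + t\<^sup>2 * (b \<bullet> b)"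
    by (simp add: inner_add_left inner_add_right inner_commute algebra_simps power2_eq_square)
  also have "\<dots> = (norm x0)\<^sup>2 + 2 * (x0 \<bullet> b) * t + t\<^sup>2"
    using assms by (simp add: dot_square_norm)
  finally have "(x0 + t *\<^sub>R b) \<bullet> (x0 + t *\<^sub>R b) = (norm x0)\<^sup>2 + 2 * (x0 \<bullet> b) * t + t\<^sup>2" .
  thus ?thesis by (simp add: norm_eq_sqrt_inner)
qed

lemma sum_sq_basis:
  fixes x :: "'a::euclidean_space"
  shows "(\<Sum>b\<in>Basis. (x \<bullet> b)\<^sup>2) = (norm x)\<^sup>2"
proof -
  have "(\<Sum>b\<in>Basis. (x \<bullet> b)\<^sup>2) = x \<bullet> x" by (simp add: euclidean_inner[of x x] power2_eq_square)
  thus ?thesis by (simp add: dot_square_norm)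
qed

lemma cmp:
  fixes U :: "'a::euclidean_space \<Rightarrow> real"
  assumes C2: "C2_with U DU DDU" and eq: "\<forall>x. - laplacian_with DDU x + U x = U x ^ 3"
    and pos: "\<forall>x. U x > 0" and lim: "(U \<longlongrightarrow> 0) at_infinity"
    and a: "0 < a" and R: "R > 0"
    and hyp: "\<forall>x. norm x \<ge> R \<longrightarrow> (U x)\<^sup>2 < 1 \<and> (U x)\<^sup>2 \<le> 1 - a\<^sup>2 + a * (real DIM('a) - 1) / norm x"
  shows "\<exists>C. \<forall>x. U x \<le> C * exp (- a * norm x)"
proof -
  have dU: "\<forall>x. (U has_derivative blinfun_apply (DU x)) (at x)"
    and dDU: "\<forall>x. (DU has_derivative blinfun_apply (DDU x)) (at x)"
    using C2 by (auto simp: C2_with_def)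
  have cont: "continuous_on S U" for S
    using dU by (meson continuous_at_imp_continuous_on has_derivative_continuous)
  obtain xm where xm: "xm \<in> cball 0 R" "\<forall>x\<in>cball 0 R. U x \<le> U xm"
    using continuous_attains_sup[OF compact_cball, of 0 R U] cont R by fastforce
  define C where "C = U xm * exp (a * R)"
  have C0: "C > 0" using pos by (simp add: C_def)
  have inner: "U x \<le> C * exp (- a * norm x)" if "norm x \<le> R" for x
  proof -
    have "U x \<le> U xm" using xm that by auto
    also have "\<dots> = C * exp (- a * R)" by (simp add: C_def mult_exp_exp)
    also have "\<dots> \<le> C * exp (- a * norm x)" using C0 a that by (auto intro!: mult_left_mono)
    finally show ?thesis .
  qed
  have outer: "U x \<le> C * exp (- a * norm x)" if px: "norm x \<ge> R" for x
  proof (rule ccontr)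
    assume nt: "\<not> U x \<le> C * exp (- a * norm x)"
    define z where "z = (\<lambda>x. U x - C * exp (- a * norm x))"
    define \<delta> where "\<delta> = z x"
    have \<delta>: "\<delta> > 0" using nt by (simp add: \<delta>_def z_def)
    obtain R' where R': "\<forall>y. norm y \<ge> R' \<longrightarrow> dist (U y) 0 < \<delta>"
      using lim \<delta> unfolding Lim_at_infinity by blast
    define K where "K = {y::'a. R \<le> norm y \<and> norm y \<le> R'}"
    have Kc: "compact K"
    proof -
      have "closed K" unfolding K_def
        by (intro closed_Collect_conj closed_Collect_le continuous_intros)
      moreover have "bounded K" unfolding K_def bounded_iff by auto
      ultimately show ?thesis by (simp add: compact_eq_bounded_closed)
    qed
    have xK: "x \<in> K"
    proof -
      have "\<not> norm x \<ge> R'"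
      proof
        assume "norm x \<ge> R'"
        hence "U x < \<delta>" using R' pos by (auto simp: dist_real_def)
        moreover have "C * exp (- a * norm x) > 0" using C0 by simp
        ultimately show False by (simp add: \<delta>_def z_def)
      qed
      thus ?thesis using px by (auto simp: K_def)
    qed
    have zc: "continuous_on K z" unfolding z_def
      by (intro continuous_intros cont)
    obtain x0 where x0: "x0 \<in> K" "\<forall>y\<in>K. z y \<le> z x0"
      using continuous_attains_sup[OF Kc _ zc] xK by blast
    have zx0: "z x0 \<ge> \<delta>" using x0 xK by (auto simp: \<delta>_def)
    have r1: "norm x0 > R"
    proof (rule ccontr)
      assume "\<not> norm x0 > R"
      hence "z x0 \<le> 0" using inner[of x0] by (simp add: z_def)
      thus False using zx0 \<delta> by simp
    qed
    have r2: "norm x0 < R'"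
    proof (rule ccontr)
      assume "\<not> norm x0 < R'"
      hence "R' \<le> norm x0" by simp
      hence "\<bar>U x0\<bar> < \<delta>" using R' by (simp add: dist_real_def)
      hence "U x0 < \<delta>" by simp
      moreover have "C * exp (- a * norm x0) > 0" using C0 by simp
      ultimately have "z x0 < \<delta>" by (simp add: z_def)
      thus False using zx0 by simp
    qed
    define r where "r = norm x0"
    have r0: "r > 0" using r1 R unfolding r_def by linarith
    define \<epsilon> where "\<epsilon> = min (r - R) (R' - r)"
    have \<epsilon>: "\<epsilon> > 0" using r1 r2 by (simp add: \<epsilon>_def r_def)
    define \<phi>2 where "\<phi>2 = (\<lambda>c. exp (-a*r) * (a\<^sup>2 * c\<^sup>2 / r\<^sup>2 - a * (r\<^sup>2 - c\<^sup>2) / r^3))"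
    have each: "blinfun_apply (blinfun_apply (DDU x0) b) b - C * \<phi>2 (x0 \<bullet> b) \<le> 0" if b: "b \<in> Basis" for b
    proof -
      define c where "c = x0 \<bullet> b"
      define N where "N = (\<lambda>t. sqrt (r\<^sup>2 + 2*c*t + t\<^sup>2))"
      have Nn: "norm (x0 + t *\<^sub>R b) = N t" for t
        using norm_line[OF b, of x0 t] by (simp add: N_def c_def r_def)
      have nb1: "norm b = 1" using b by simp
      have inK: "x0 + t *\<^sub>R b \<in> K" and Npos: "N t > 0" if "\<bar>t\<bar> < \<epsilon>" for t
      proof -
        have "norm (x0 + t *\<^sub>R b) \<ge> r - \<bar>t\<bar>"
          using norm_triangle_ineq2[of x0 "- (t *\<^sub>R b)"] nb1 by (simp add: r_def)
        moreover have "norm (x0 + t *\<^sub>R b) \<le> r + \<bar>t\<bar>"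
          using norm_triangle_ineq[of x0 "t *\<^sub>R b"] nb1 by (simp add: r_def)
        ultimately have "R < norm (x0 + t *\<^sub>R b)" "norm (x0 + t *\<^sub>R b) < R'"
          using that by (auto simp: \<epsilon>_def)
        thus "x0 + t *\<^sub>R b \<in> K" "N t > 0" using R Nn[of t] by (auto simp: K_def)
      qed
      define g where "g = (\<lambda>t. U (x0 + t *\<^sub>R b) - C * exp (-a * N t))"
      define g' where "g' = (\<lambda>t. blinfun_apply (DU (x0 + t *\<^sub>R b)) b - C * (-a * exp (-a * N t) * ((c+t) / N t)))"
      have d1: "\<forall>t. \<bar>t\<bar> < \<epsilon> \<longrightarrow> (g has_real_derivative g' t) (at t)"
      proof (intro allI impI)
        fix t assume t: "\<bar>t\<bar> < \<epsilon>"
        have q: "r\<^sup>2 + 2*c*t + t\<^sup>2 > 0"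
          using Npos[OF t] unfolding N_def using real_sqrt_gt_0_iff by blast
        show "(g has_real_derivative g' t) (at t)"
          unfolding g_def g'_def N_def
          by (rule DERIV_diff[OF DU_line[OF dU, of x0 b t] DERIV_cmult[OF phi_d1[OF q, of a]]])
      qed
      have d2: "(g' has_real_derivative (blinfun_apply (blinfun_apply (DDU x0) b) b - C * \<phi>2 c)) (at 0)"
        unfolding g'_def N_def \<phi>2_def
        using DERIV_diff[OF DDU_line[OF dDU, of x0 b 0] DERIV_cmult[OF phi_d2[OF r0, of a c], of C]]
        by simp
      have mx: "\<forall>t. \<bar>t\<bar> < \<epsilon> \<longrightarrow> g t \<le> g 0"
      proof (intro allI impI)
        fix t assume t: "\<bar>t\<bar> < \<epsilon>"
        have "z (x0 + t *\<^sub>R b) \<le> z x0" using x0(2) inK[OF t] by blast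
        moreover have "g t = z (x0 + t *\<^sub>R b)" by (simp add: g_def z_def Nn)
        moreover have "g 0 = z x0" using Nn[of 0] by (simp add: g_def z_def)
        ultimately show "g t \<le> g 0" by simp
      qed
      show ?thesis using second_deriv_max[OF \<epsilon> d1 d2 mx] by (simp add: c_def)
    qed
    have "laplacian_with DDU x0 \<le> C * (\<Sum>b\<in>Basis. \<phi>2 (x0 \<bullet> b))"
      unfolding laplacian_with_def sum_distrib_left
      by (rule sum_mono) (use each in auto)
    also have "(\<Sum>b\<in>Basis. \<phi>2 (x0 \<bullet> b)) = exp (-a*r) * (a\<^sup>2 - a * (real DIM('a) - 1) / r)"
    proof -
      have s: "(\<Sum>b\<in>Basis. (x0 \<bullet> b)\<^sup>2) = r\<^sup>2" by (simp add: sum_sq_basis r_def)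
      have p: "\<phi>2 c = exp (-a*r) * (a\<^sup>2/r\<^sup>2 + a/r^3) * c\<^sup>2 - exp (-a*r) * a / r" for c
        using r0 unfolding \<phi>2_def by (simp add: field_simps power2_eq_square power3_eq_cube)
      have "(\<Sum>b\<in>Basis. \<phi>2 (x0 \<bullet> b)) = exp (-a*r) * (a\<^sup>2/r\<^sup>2 + a/r^3) * (\<Sum>b\<in>Basis. (x0 \<bullet> b)\<^sup>2)
              - real DIM('a) * (exp (-a*r) * a / r)"
        unfolding p by (simp add: sum_subtractf sum_distrib_left)
      also have "\<dots> = exp (-a*r) * (a\<^sup>2 - a * (real DIM('a) - 1) / r)"
        using r0 unfolding s by (simp add: field_simps power2_eq_square power3_eq_cube)
      finally show ?thesis .
    qed
    finally have lapb: "laplacian_with DDU x0 \<le> C * (exp (-a*r) * (a\<^sup>2 - a * (real DIM('a) - 1) / r))" .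
    have lapU: "laplacian_with DDU x0 = U x0 - U x0 ^ 3" using eq[rule_format, of x0] by simp
    have h0: "(U x0)\<^sup>2 < 1" "(U x0)\<^sup>2 \<le> 1 - a\<^sup>2 + a * (real DIM('a) - 1) / r"
      using hyp r1 by (auto simp: r_def)
    define E where "E = C * exp (-a*r)"
    have E0: "E > 0" using C0 by (simp add: E_def)
    have "U x0 * (1 - (U x0)\<^sup>2) \<le> E * (a\<^sup>2 - a * (real DIM('a) - 1) / r)"
      using lapb lapU by (simp add: E_def power2_eq_square power3_eq_cube algebra_simps)
    also have "\<dots> \<le> E * (1 - (U x0)\<^sup>2)"
      using E0 h0(2) by (intro mult_left_mono) auto
    finally have "(1 - (U x0)\<^sup>2) * (U x0 - E) \<le> 0" by (simp add: algebra_simps)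
    moreover have "U x0 - E > 0" using zx0 \<delta> by (simp add: z_def E_def r_def)
    moreover have "1 - (U x0)\<^sup>2 > 0" using h0 by simp
    ultimately show False by (simp add: mult_le_0_iff)
  qed
  show ?thesis by (rule exI[of _ C]) (metis inner outer linear)
qed


lemma exp_ge_sq: "(r::real) \<ge> 0 \<Longrightarrow> exp r \<ge> r\<^sup>2 / 4"
proof -
  assume r: "r \<ge> 0"
  have "1 + r/2 \<le> exp (r/2)" by (rule exp_ge_add_one_self)
  hence "r/2 \<le> exp (r/2)" by linarith
  hence "(r/2)\<^sup>2 \<le> (exp (r/2))\<^sup>2" using r by (intro power_mono) auto
  also have "(exp (r/2))\<^sup>2 = exp r" by (simp add: power2_eq_square exp_add[symmetric])
  finally show ?thesis by (simp add: power2_eq_square)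
qed

lemma decay:
  fixes U :: "'a::euclidean_space \<Rightarrow> real"
  assumes gs: "ground_state U" and dim: "DIM('a) \<ge> 2"
  shows "\<exists>C. \<forall>x. U x \<le> C * exp (- norm x)"
proof -
  have gs': "(\<exists>DU DDU. C2_with U DU DDU \<and> (\<forall>x. - laplacian_with DDU x + U x = U x ^ 3)) \<and>
     (\<forall>x. U x > 0) \<and> (\<forall>x y. norm x = norm y \<longrightarrow> U x = U y) \<and> (U \<longlongrightarrow> 0) at_infinity"
    using gs unfolding ground_state_def by assumption
  obtain DU DDU where C2: "C2_with U DU DDU" and eq: "\<forall>x. - laplacian_with DDU x + U x = U x ^ 3"
    using gs' by blast
  have pos: "\<forall>x. U x > 0" and lim: "(U \<longlongrightarrow> 0) at_infinity" using gs' by blast+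
  have n1: "real DIM('a) - 1 \<ge> 1" using dim by simp
  obtain R1 where R1: "\<forall>x. norm x \<ge> R1 \<longrightarrow> dist (U x) 0 < 1/2"
    using lim unfolding Lim_at_infinity by (meson half_gt_zero zero_less_one)
  define R where "R = max R1 1"
  have hyp1: "\<forall>x. norm x \<ge> R \<longrightarrow> (U x)\<^sup>2 < 1 \<and> (U x)\<^sup>2 \<le> 1 - (1/2)\<^sup>2 + (1/2) * (real DIM('a) - 1) / norm x"
  proof (intro allI impI)
    fix x :: 'a assume x: "norm x \<ge> R"
    hence "\<bar>U x\<bar> < 1/2" using R1 by (auto simp: R_def dist_real_def)
    hence "(U x)^2 < (1/2)^2" using pos[rule_format, of x]
      by (intro power_strict_mono) auto
    hence u: "(U x)\<^sup>2 \<le> 1/4" by (simp add: power2_eq_square)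
    have nn: "0 \<le> (1/2) * (real DIM('a) - 1) / norm x" using n1 by simp
    have e: "1 - (1/2::real)\<^sup>2 = 3/4" by (simp add: power2_eq_square)
    show "(U x)\<^sup>2 < 1 \<and> (U x)\<^sup>2 \<le> 1 - (1/2)\<^sup>2 + (1/2) * (real DIM('a) - 1) / norm x"
      unfolding e using u nn by linarith
  qed
  obtain C1 where C1: "\<forall>x. U x \<le> C1 * exp (- (1/2) * norm x)"
  proof -
    have R0: "R > 0" unfolding R_def by (simp add: less_max_iff_disj)
    have a0: "(0::real) < 1/2" by simp
    show ?thesis using cmp[OF C2 eq pos lim a0 R0 hyp1] that by blast
  qed
  define R2 where "R2 = max 2 (4 * C1\<^sup>2 + 1)"
  have hyp2: "\<forall>x. norm x \<ge> R2 \<longrightarrow> (U x)\<^sup>2 < 1 \<and> (U x)\<^sup>2 \<le> 1 - 1\<^sup>2 + 1 * (real DIM('a) - 1) / norm x"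
  proof (intro allI impI)
    fix x :: 'a assume x: "norm x \<ge> R2"
    define r where "r = norm x"
    have r: "r \<ge> 2" "r \<ge> 4 * C1\<^sup>2 + 1" using x by (auto simp: r_def R2_def)
    have "(U x)\<^sup>2 \<le> (C1 * exp (- (1/2) * r))\<^sup>2"
      using C1 pos by (intro power_mono) (auto simp: r_def less_imp_le)
    also have "\<dots> = C1\<^sup>2 / exp r"
      by (simp add: power_mult_distrib power2_eq_square exp_add[symmetric] exp_minus field_simps)
    also have "\<dots> \<le> C1\<^sup>2 / (r\<^sup>2 / 4)"
      using exp_ge_sq[of r] r by (intro divide_left_mono) auto
    also have "\<dots> = (4 * C1\<^sup>2) / r\<^sup>2" by simp
    also have "\<dots> \<le> r / r\<^sup>2" using r by (intro divide_right_mono) auto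
    also have "\<dots> = 1 / r" using r by (simp add: power2_eq_square)
    finally have u: "(U x)\<^sup>2 \<le> 1 / r" .
    have "1 / r \<le> (real DIM('a) - 1) / r" using n1 r by (intro divide_right_mono) auto
    moreover have "1 / r < 1" using r by simp
    ultimately show "(U x)\<^sup>2 < 1 \<and> (U x)\<^sup>2 \<le> 1 - 1\<^sup>2 + 1 * (real DIM('a) - 1) / norm x"
      using u by (simp add: r_def)
  qed
  have "\<exists>C. \<forall>x. U x \<le> C * exp (- 1 * norm x)"
  proof -
    have R0: "R2 > 0" unfolding R2_def by (simp add: less_max_iff_disj)
    show ?thesis by (rule cmp[OF C2 eq pos lim _ R0 hyp2]) simp
  qed
  thus ?thesis by simp
qed


lemma ix12:
  assumes "CARD('n::{finite,wellorder}) \<ge> 2"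
  shows "(ix1::'n) \<noteq> ix2"
proof -
  have "\<exists>j::'n. j \<noteq> ix1"
  proof (rule ccontr)
    assume "\<not> (\<exists>j::'n. j \<noteq> ix1)"
    hence "(UNIV::'n set) \<subseteq> {ix1}" by auto
    hence "CARD('n) \<le> card {ix1::'n}" by (intro card_mono) auto
    thus False using assms by simp
  qed
  hence "(LEAST i::'n. i \<noteq> ix1) \<noteq> ix1" by (rule LeastI_ex)
  thus ?thesis by (simp add: ix2_def)
qed

lemma sum_split2:
  fixes f :: "'n::{finite,wellorder} \<Rightarrow> real"
  assumes "(ix1::'n) \<noteq> ix2"
  shows "(\<Sum>j\<in>UNIV. f j) = f ix1 + f ix2 + (\<Sum>j\<in>UNIV - {ix1, ix2}. f j)"
proof -
  have "(\<Sum>j\<in>UNIV. f j) = (\<Sum>j\<in>{ix1,ix2}. f j) + (\<Sum>j\<in>UNIV - {ix1, ix2}. f j)"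
    using sum.subset_diff[of "{ix1,ix2}" UNIV f] by (simp add: add.commute)
  thus ?thesis using assms by simp
qed

lemma norm_sq_vec: "(norm (v::real^'n))\<^sup>2 = (\<Sum>j\<in>UNIV. (v$j)\<^sup>2)"
  by (simp add: norm_vec_def L2_set_def sum_nonneg)

lemma norm_two:
  fixes v :: "real^'n::{finite,wellorder}"
  assumes "(ix1::'n) \<noteq> ix2" "\<forall>j. j \<noteq> ix1 \<and> j \<noteq> ix2 \<longrightarrow> v$j = 0"
  shows "(norm v)\<^sup>2 = (v$ix1)\<^sup>2 + (v$ix2)\<^sup>2"
proof -
  have "(\<Sum>j\<in>UNIV - {ix1, ix2}. (v$j)\<^sup>2) = 0" using assms(2) by (intro sum.neutral) auto
  thus ?thesis unfolding norm_sq_vec sum_split2[OF assms(1)] by simp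
qed

lemma Rot_diff: "Rot \<theta> (x - y) = Rot \<theta> x - Rot \<theta> y"
  by (simp add: Rot_def vec_eq_iff algebra_simps)

lemma Rot_scale: "Rot \<theta> (c *\<^sub>R x) = c *\<^sub>R Rot \<theta> x"
  by (simp add: Rot_def vec_eq_iff algebra_simps)

lemma r3: fixes X Y p q :: real
  shows "(X*p + Y*(-q))*p + (-X*(-q) + Y*p)*q = X*(p\<^sup>2+q\<^sup>2)"
    and "-(X*p + Y*(-q))*q + (-X*(-q) + Y*p)*p = Y*(p\<^sup>2+q\<^sup>2)"
  by (simp_all add: power2_eq_square algebra_simps)

lemma Rot_inv:
  fixes x :: "real^'n::{finite,wellorder}"
  assumes "(ix1::'n) \<noteq> ix2"
  shows "Rot \<theta> (Rot (-\<theta>) x) = x"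
proof -
  have ne: "((ix2::'n) = ix1) = False" using assms by auto
  have c: "(cos \<theta>)\<^sup>2 + (sin \<theta>)\<^sup>2 = 1" by simp
  have "(Rot \<theta> (Rot (-\<theta>) x)) $ j = x $ j" for j
    unfolding Rot_def
    by (simp only: vec_lambda_beta if_True if_False ne simp_thms cos_minus sin_minus r3 c mult_1_right)
       (simp add: Rot_def)
  thus ?thesis by (simp add: vec_eq_iff)
qed

lemma r2: fixes X Y p q :: real
  shows "(X*p + Y*q)\<^sup>2 + (- X*q + Y*p)\<^sup>2 = (X\<^sup>2 + Y\<^sup>2)*(p\<^sup>2+q\<^sup>2)"
  by (simp add: power2_eq_square algebra_simps)

lemma Rot_norm:
  fixes x :: "real^'n::{finite,wellorder}"
  assumes "(ix1::'n) \<noteq> ix2"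
  shows "norm (Rot \<theta> x) = norm x"
proof -
  have o: "(\<Sum>j\<in>UNIV - {ix1, ix2}. ((Rot \<theta> x)$j)\<^sup>2) = (\<Sum>j\<in>UNIV - {ix1, ix2}. (x$j)\<^sup>2)"
    by (intro sum.cong) (auto simp: Rot_def)
  have c: "(cos \<theta>)\<^sup>2 + (sin \<theta>)\<^sup>2 = 1" by simp
  have "((Rot \<theta> x)$ix1)\<^sup>2 + ((Rot \<theta> x)$ix2)\<^sup>2 = (x$ix1)\<^sup>2 + (x$ix2)\<^sup>2"
  proof -
    have "((Rot \<theta> x)$ix1)\<^sup>2 + ((Rot \<theta> x)$ix2)\<^sup>2 = ((x$ix1)\<^sup>2 + (x$ix2)\<^sup>2) * ((cos \<theta>)\<^sup>2 + (sin \<theta>)\<^sup>2)"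
    proof -
      have ne: "((ix2::'n) = ix1) = False" using assms by auto
      show ?thesis unfolding Rot_def by (simp only: vec_lambda_beta if_True if_False ne r2 simp_thms)
    qed
    thus ?thesis using c by simp
  qed
  hence "(norm (Rot \<theta> x))\<^sup>2 = (norm x)\<^sup>2"
    unfolding norm_sq_vec sum_split2[OF assms] o by simp
  thus ?thesis by (simp add: power2_eq_iff_nonneg)
qed

definition cs :: "real \<Rightarrow> real^'n::{finite,wellorder}" where
  "cs a = (\<chi> j. if j = ix1 then cos a else if j = ix2 then sin a else 0)"

lemma xi_cs: "xi k l = cs (2 * pi * (real l - 1) / real k)"
  by (simp add: xi_def cs_def)

lemma Theta_dist:
  fixes x :: "real^'n::{finite,wellorder}"
  assumes "(ix1::'n) \<noteq> ix2"
  shows "norm (ThetaHat d k i x - \<rho> *\<^sub>R xi k h) = norm (x - \<rho> *\<^sub>R eta d k i h)"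
proof -
  define \<theta> where "\<theta> = 2 * pi * (real i - 1) / (real d * real k)"
  have "\<rho> *\<^sub>R (xi k h :: real^'n::{finite,wellorder}) = Rot \<theta> (\<rho> *\<^sub>R eta d k i h)"
    by (simp add: eta_def Rot_scale Rot_inv[OF assms] \<theta>_def)
  hence "ThetaHat d k i x - \<rho> *\<^sub>R xi k h = Rot \<theta> (x - \<rho> *\<^sub>R eta d k i h)"
    by (simp add: ThetaHat_def Rot_diff \<theta>_def)
  thus ?thesis by (simp add: Rot_norm[OF assms])
qed


lemma sq_diff_id: fixes p q y z :: real
  shows "(p-q)\<^sup>2 + (y-z)\<^sup>2 = (p\<^sup>2+y\<^sup>2) + (q\<^sup>2+z\<^sup>2) - 2*(p*q + y*z)"
  by (simp add: power2_eq_square algebra_simps)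

lemma cs_dist:
  fixes u :: "real^'n::{finite,wellorder}"
  assumes ne0: "(ix1::'n) \<noteq> ix2" and u: "u = cs a - cs b"
  shows "norm u = 2 * \<bar>sin ((a - b) / 2)\<bar>"
proof -
  have ne: "((ix2::'n) = ix1) = False" using ne0 by auto
  have u1: "u $ ix1 = cos a - cos b" and u2: "u $ ix2 = sin a - sin b"
    and u3: "\<forall>j. j \<noteq> ix1 \<and> j \<noteq> ix2 \<longrightarrow> u$j = 0"
    using ne by (auto simp: u cs_def)
  have "(norm u)\<^sup>2 = (cos a - cos b)\<^sup>2 + (sin a - sin b)\<^sup>2"
    using norm_two[OF ne0 u3] u1 u2 by simp
  also have "\<dots> = 2 - 2 * cos (a - b)"
    unfolding sq_diff_id cos_diff by (simp add: add.commute)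
  also have "\<dots> = (2 * \<bar>sin ((a - b) / 2)\<bar>)\<^sup>2"
  proof -
    have "cos (a - b) = 1 - 2 * (sin ((a-b)/2))\<^sup>2"
      using cos_double_sin[of "(a-b)/2"] by (simp only: mult_2 field_sum_of_halves)
    thus ?thesis by (simp add: power_mult_distrib)
  qed
  finally have sq: "(norm u)\<^sup>2 = (2 * \<bar>sin ((a - b) / 2)\<bar>)\<^sup>2" .
  have nn: "0 \<le> 2 * \<bar>sin ((a - b) / 2)\<bar>" by simp
  show ?thesis using sq nn norm_ge_zero power2_eq_iff_nonneg by metis
qed

lemma eta_cs:
  fixes v :: "real^'n::{finite,wellorder}"
  assumes ne0: "(ix1::'n) \<noteq> ix2" and v: "v = eta d k i l"
  shows "v = cs (2 * pi * (real l - 1) / real k + 2 * pi * (real i - 1) / (real d * real k))"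
proof -
  have ne: "((ix2::'n) = ix1) = False" using ne0 by auto
  show ?thesis
    unfolding v vec_eq_iff eta_def Rot_def cs_def xi_def
    by (simp add: ne cos_add sin_add algebra_simps)
qed


lemma sin_cubic: fixes x :: real assumes "x \<ge> 0" shows "sin x \<ge> x - x^3/6"
proof -
  have "\<bar>sin x - (\<Sum>m<3. sin_coeff m * x ^ m)\<bar> \<le> inverse (fact 3) * \<bar>x\<bar> ^ 3"
    by (rule Maclaurin_sin_bound)
  moreover have "(\<Sum>m<3. sin_coeff m * x ^ m) = x"
    by (simp add: sin_coeff_def numeral_3_eq_3)
  moreover have f: "(fact 3::real) = 6" by (simp add: fact_numeral)
  moreover have "\<bar>x\<bar> ^ 3 = x^3" using assms by simp
  moreover have "inverse (6::real) * x ^ 3 = x^3/6" by simp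
  ultimately have "\<bar>sin x - x\<bar> \<le> x^3/6" by simp
  hence "- (x^3/6) \<le> sin x - x" by (rule abs_le_D2[THEN minus_le_iff[THEN iffD1]])
  thus ?thesis by simp
qed

lemma pi_le: "pi \<le> 17/5"
proof (rule ccontr)
  assume "\<not> pi \<le> 17/5"
  hence "17/10 < pi/2" by simp
  hence c: "cos (17/10::real) > 0" by (intro cos_gt_zero_pi) auto
  have "sin (17/20::real) \<ge> 17/20 - (17/20)^3/6" by (rule sin_cubic) simp
  hence s: "sin (17/20::real) \<ge> 74/100" by (simp add: power3_eq_cube)
  hence "(sin (17/20::real))\<^sup>2 \<ge> (74/100)\<^sup>2" by (intro power_mono) auto
  moreover have "cos (17/10::real) = 1 - 2 * (sin (17/20))\<^sup>2"
    using cos_double_sin[of "17/20"] by simp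
  ultimately have "cos (17/10::real) < 0" by (simp add: power2_eq_square)
  thus False using c by simp
qed

lemma sin_half: fixes x :: real assumes "0 \<le> x" "x \<le> pi/2" shows "sin x \<ge> x/2"
proof -
  have "x \<le> 17/10" using assms pi_le by simp
  hence "x^2 \<le> (17/10)^2" using assms by (intro power_mono) auto
  hence "x*x \<le> 3" by (simp add: power2_eq_square)
  hence "x*(x*x) \<le> x*3" using assms by (intro mult_left_mono) auto
  hence "x^3 \<le> 3 * x" by (simp add: power3_eq_cube mult.commute)
  thus ?thesis using sin_cubic[OF assms(1)] by simp
qed

lemma sin_jordan: fixes x :: real assumes "0 \<le> x" "x \<le> pi" shows "sin x \<ge> min x (pi - x) / 2"
proof (cases "x \<le> pi/2")
  case True thus ?thesis using sin_half[of x] assms by simp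
next
  case False
  hence "sin (pi - x) \<ge> (pi - x)/2" using sin_half[of "pi - x"] assms by simp
  thus ?thesis by simp
qed

lemma geom_aux:
  fixes q :: real assumes "0 \<le> q" "q \<le> 1/2"
  shows "(\<Sum>m\<in>{1..<Suc n}. q^m) + 2*q^(Suc n) \<le> 2*q"
proof (induction n)
  case 0 thus ?case by simp
next
  case (Suc n)
  have "2 * q^(Suc (Suc n)) = (2*q) * q^(Suc n)" by simp
  also have "\<dots> \<le> 1 * q^(Suc n)" using assms by (intro mult_right_mono) auto
  finally have "2 * q^(Suc (Suc n)) \<le> q^(Suc n)" by simp
  thus ?case using Suc by (simp add: sum.atLeastLessThan_Suc)
qed

lemma geom_bound:
  fixes q :: real assumes "0 \<le> q" "q \<le> 1/2"
  shows "(\<Sum>m\<in>{1..<N}. q^m) \<le> 2*q"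
proof (cases N)
  case 0 thus ?thesis using assms by simp
next
  case (Suc n)
  have "0 \<le> 2*q^(Suc n)" using assms by simp
  thus ?thesis using geom_aux[OF assms, of n] unfolding Suc by linarith
qed

lemma sumS:
  fixes k :: nat and t c \<rho> :: real
  assumes k: "k \<ge> 2" and t: "0 \<le> t" "t \<le> 1" and c: "c \<ge> 0" and \<rho>: "\<rho> \<ge> 0"
    and q: "exp (-c*pi*\<rho>/k) \<le> 1/2"
  shows "(\<Sum>m\<in>{0..<k}. exp (-2*c*\<rho>* sin (pi*(real m+t)/k)))
     \<le> exp (-2*c*\<rho>* sin (pi*t/k)) + exp (-2*c*\<rho>* sin (pi*(1-t)/k)) + 4 * exp (-c*pi*\<rho>/k)"
proof -
  define f where "f = (\<lambda>m::nat. exp (-2*c*\<rho>* sin (pi*(real m+t)/k)))"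
  define Q where "Q = exp (-c*pi*\<rho>/k)"
  have Q0: "0 \<le> Q" "Q \<le> 1/2" using q by (auto simp: Q_def)
  have kp: "real k > 0" using k by simp
  have mid: "f m \<le> Q^m + Q^(k-1-m)" if m: "1 \<le> m" "m < k - 1" for m
  proof -
    define x where "x = pi*(real m+t)/k"
    have mk: "real m + 1 \<le> real k - 1" using m k by linarith
    have mt: "real m + t \<le> real k" using mk t by linarith
    have "pi*(real m+t)/k \<le> pi*real k/k" using mt kp by (intro divide_right_mono mult_left_mono) auto
    hence x0: "0 \<le> x" "x \<le> pi" using t kp by (auto simp: x_def)
    have px: "pi - x = pi * (real k - real m - t) / k" using kp by (simp add: x_def field_simps)
    have s: "sin x \<ge> min x (pi - x) / 2" by (rule sin_jordan[OF x0])
    have "c*\<rho>*min x (pi - x) \<le> c*\<rho>*(2* sin x)"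
      using s c \<rho> by (intro mult_left_mono) auto
    hence A: "2*c*\<rho>* sin x \<ge> c*\<rho>*min x (pi - x)" by (simp add: mult_ac)
    have B: "c*\<rho>*min x (pi - x) \<ge> min ((c*pi*\<rho>/k) * real m) ((c*pi*\<rho>/k) * real (k-1-m))"
    proof -
      have "x \<ge> pi * real m / k" using t kp by (simp add: x_def divide_right_mono)
      moreover have "pi - x \<ge> pi * real (k-1-m) / k"
        unfolding px using t kp m k by (intro divide_right_mono mult_left_mono) (auto simp: of_nat_diff)
      ultimately have "min x (pi - x) \<ge> min (pi * real m / k) (pi * real (k-1-m) / k)" by auto
      hence "c*\<rho>*min x (pi - x) \<ge> c*\<rho>*min (pi * real m / k) (pi * real (k-1-m) / k)"
        using c \<rho> by (intro mult_left_mono) auto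
      moreover have "c*\<rho>*min (pi * real m / k) (pi * real (k-1-m) / k)
           = min ((c*pi*\<rho>/k) * real m) ((c*pi*\<rho>/k) * real (k-1-m))"
      proof -
        have cr: "c*\<rho> \<ge> 0" using c \<rho> by simp
        have "c*\<rho>*min (pi * real m / k) (pi * real (k-1-m) / k) = min (c*\<rho>*(pi * real m / k)) (c*\<rho>*(pi * real (k-1-m) / k))"
          using cr by (simp only: min_mult_distrib_left if_True)
        thus ?thesis by (simp add: mult_ac)
      qed
      ultimately show ?thesis by simp
    qed
    from A B have e: "-2*c*\<rho>* sin x \<le> - min ((c*pi*\<rho>/k) * real m) ((c*pi*\<rho>/k) * real (k-1-m))" by simp
    have "f m = exp (-2*c*\<rho>* sin x)" by (simp add: f_def x_def)
    also have "\<dots> \<le> exp (- min ((c*pi*\<rho>/k) * real m) ((c*pi*\<rho>/k) * real (k-1-m)))" using e by simp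
    also have "\<dots> \<le> exp (-((c*pi*\<rho>/k) * real m)) + exp (-((c*pi*\<rho>/k) * real (k-1-m)))"
      by (cases "(c*pi*\<rho>/k) * real m \<le> (c*pi*\<rho>/k) * real (k-1-m)") (auto simp: min_def)
    also have "\<dots> = Q^m + Q^(k-1-m)"
      unfolding Q_def exp_of_nat_mult[symmetric] by (simp add: mult_ac)
    finally show ?thesis .
  qed
  have split: "(\<Sum>m\<in>{0..<k}. f m) = f 0 + (\<Sum>m\<in>{1..<k-1}. f m) + f (k-1)"
  proof -
    have "(\<Sum>m\<in>{0..<k}. f m) = f 0 + (\<Sum>m\<in>{1..<k}. f m)"
      using k by (simp add: sum.atLeast_Suc_lessThan)
    also have "{1..<k} = {1..<Suc (k-1)}" using k by simp
    also have "(\<Sum>m\<in>{1..<Suc (k-1)}. f m) = (\<Sum>m\<in>{1..<k-1}. f m) + f (k-1)"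
      using k by (intro sum.atLeastLessThan_Suc) simp
    finally show ?thesis by simp
  qed
  have "(\<Sum>m\<in>{1..<k-1}. f m) \<le> (\<Sum>m\<in>{1..<k-1}. Q^m + Q^(k-1-m))"
    by (intro sum_mono mid) auto
  also have "\<dots> = (\<Sum>m\<in>{1..<k-1}. Q^m) + (\<Sum>m\<in>{1..<k-1}. Q^(k-1-m))"
    by (simp add: sum.distrib)
  also have "(\<Sum>m\<in>{1..<k-1}. Q^(k-1-m)) = (\<Sum>m\<in>{1..<k-1}. Q^m)"
    by (rule sum.reindex_bij_witness[of _ "\<lambda>m. k-1-m" "\<lambda>m. k-1-m"]) auto
  also have "(\<Sum>m\<in>{1..<k-1}. Q^m) + (\<Sum>m\<in>{1..<k-1}. Q^m) \<le> 4 * Q"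
    using geom_bound[OF Q0, of "k-1"] by simp
  finally have midb: "(\<Sum>m\<in>{1..<k-1}. f m) \<le> 4 * Q" .
  have f0: "f 0 = exp (-2*c*\<rho>* sin (pi*t/k))" by (simp add: f_def)
  have fk: "f (k-1) = exp (-2*c*\<rho>* sin (pi*(1-t)/k))"
  proof -
    have "pi*(real (k-1)+t)/k = pi - pi*(1-t)/k" using k kp by (simp add: of_nat_diff field_simps)
    thus ?thesis by (simp add: f_def sin_pi_minus)
  qed
  have "(\<Sum>m\<in>{0..<k}. exp (-2*c*\<rho>* sin (pi*(real m+t)/k))) = sum f {0..<k}" unfolding f_def ..
  thus ?thesis using split midb f0 fk unfolding Q_def by linarith
qed


lemma abs_sin_shift: fixes q :: int shows "\<bar>sin (x + of_int q * pi)\<bar> = \<bar>sin x\<bar>"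
proof -
  have s0: "sin (of_int q * pi) = 0" using sin_zero_iff_int2 by blast
  have "(cos (of_int q * pi))\<^sup>2 = 1" using sin_cos_squared_add[of "of_int q * pi"] s0 by simp
  hence "\<bar>cos (of_int q * pi)\<bar> = 1" by (simp add: power2_eq_1_iff abs_if) (auto)
  thus ?thesis by (simp add: sin_add s0 abs_mult)
qed

lemma reidx:
  fixes F :: "nat \<Rightarrow> real" and k :: nat and j :: int
  assumes k: "k \<ge> 1"
  shows "(\<Sum>h\<in>{1..k}. F (nat ((j - int h) mod int k))) = (\<Sum>m\<in>{0..<k}. F m)"
proof (rule sum.reindex_bij_witness[of _ "\<lambda>m. nat ((j - int m - 1) mod int k) + 1" "\<lambda>h. nat ((j - int h) mod int k)"])
  have kp: "int k > 0" using k by simp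
  fix h assume h: "h \<in> {1..k}"
  have m0: "0 \<le> (j - int h) mod int k" using kp by simp
  have "(j - (j - int h) mod int k - 1) mod int k = (j - 1 - (j - int h) mod int k) mod int k" by (simp add: algebra_simps)
  also have "\<dots> = (j - 1 - (j - int h)) mod int k" by (simp add: mod_diff_right_eq)
  also have "\<dots> = int h - 1" using h by (simp add: algebra_simps)
  finally have X: "(j - (j - int h) mod int k - 1) mod int k = int (h - 1)" using h by simp
  have Y: "int (nat ((j - int h) mod int k)) = (j - int h) mod int k" using m0 by simp
  show "nat ((j - int (nat ((j - int h) mod int k)) - 1) mod int k) + 1 = h"
    unfolding Y X nat_int using h by simp
  show "nat ((j - int h) mod int k) \<in> {0..<k}" using kp
    by (simp add: nat_less_iff)
next
  have kp: "int k > 0" using k by simp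
  fix m assume m: "m \<in> {0..<k}"
  have m0: "0 \<le> (j - int m - 1) mod int k" using kp by simp
  have "(j - int (nat ((j - int m - 1) mod int k) + 1)) mod int k = (j - 1 - (j - int m - 1) mod int k) mod int k"
    using m0 by (simp add: algebra_simps)
  also have "\<dots> = (j - 1 - (j - int m - 1)) mod int k" by (simp add: mod_diff_right_eq)
  also have "\<dots> = int m" using m by simp
  finally show "nat ((j - int (nat ((j - int m - 1) mod int k) + 1)) mod int k) = m" by simp
  have b: "(j - int m - 1) mod int k < int k" using kp by simp
  hence "nat ((j - int m - 1) mod int k) < k" using m0 by (simp add: nat_less_iff)
  thus "nat ((j - int m - 1) mod int k) + 1 \<in> {1..k}" by simp
qed simp

lemma abs_sin_mod:
  fixes k :: nat and z :: int and t :: real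
  assumes k: "k \<ge> 1" and t: "0 \<le> t" "t \<le> 1"
  shows "\<bar>sin (pi * (real_of_int z + t) / real k)\<bar> = sin (pi * (real (nat (z mod int k)) + t) / real k)"
proof -
  define m where "m = z mod int k"
  define q where "q = z div int k"
  have kp: "int k > 0" using k by simp
  have m0: "0 \<le> m" "m < int k" using kp by (auto simp: m_def)
  have zq: "z = m + q * int k" by (simp add: m_def q_def)
  have rm: "real (nat m) = real_of_int m" using m0 by simp
  have "pi * (real_of_int z + t) / real k = pi * (real_of_int m + t) / real k + of_int q * pi"
    using k by (simp add: zq field_simps)
  hence "\<bar>sin (pi * (real_of_int z + t) / real k)\<bar> = \<bar>sin (pi * (real_of_int m + t) / real k)\<bar>"
    by (simp add: abs_sin_shift)
  also have "\<dots> = sin (pi * (real_of_int m + t) / real k)"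
  proof -
    have "real_of_int m + t \<le> real k"
    proof -
      have "m + 1 \<le> int k" using m0 by simp
      hence "real_of_int m + 1 \<le> real k" by linarith
      thus ?thesis using t by linarith
    qed
    hence "pi * (real_of_int m + t) / real k \<le> pi"
      using k by (simp add: divide_le_eq mult_left_mono)
    moreover have "0 \<le> pi * (real_of_int m + t) / real k" using m0 t by simp
    ultimately show ?thesis by (simp add: sin_ge_zero)
  qed
  finally have A: "\<bar>sin (pi * (real_of_int z + t) / real k)\<bar> = sin (pi * (real_of_int m + t) / real k)" .
  show ?thesis unfolding m_def[symmetric] rm by (rule A)
qed

lemma per_sum:
  fixes k :: nat and j :: int and t c \<rho> :: real
  assumes k: "k \<ge> 1" and t: "0 \<le> t" "t \<le> 1"
  shows "(\<Sum>h\<in>{1..k}. exp (- c * (\<rho> * (2 * \<bar>sin (pi * (real_of_int (j - int h) + t) / real k)\<bar>))))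
     = (\<Sum>m\<in>{0..<k}. exp (-2*c*\<rho> * sin (pi*(real m+t)/k)))"
proof -
  have "(\<Sum>h\<in>{1..k}. exp (- c * (\<rho> * (2 * \<bar>sin (pi * (real_of_int (j - int h) + t) / real k)\<bar>))))
      = (\<Sum>h\<in>{1..k}. (\<lambda>m. exp (-2*c*\<rho> * sin (pi*(real m+t)/k))) (nat ((j - int h) mod int k)))"
  proof (intro sum.cong refl)
    fix h assume "h \<in> {1..k}"
    show "exp (- c * (\<rho> * (2 * \<bar>sin (pi * (real_of_int (j - int h) + t) / real k)\<bar>)))
      = (\<lambda>m. exp (-2*c*\<rho> * sin (pi*(real m+t)/k))) (nat ((j - int h) mod int k))"
      unfolding abs_sin_mod[OF k t] by (simp add: mult_ac)
  qed
  also have "\<dots> = (\<Sum>m\<in>{0..<k}. exp (-2*c*\<rho> * sin (pi*(real m+t)/k)))"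
    by (rule reidx[OF k])
  finally show ?thesis .
qed


lemma dist_xi_eta:
  fixes u :: "real^'n::{finite,wellorder}"
  assumes ne: "(ix1::'n) \<noteq> ix2" and \<rho>: "\<rho> \<ge> 0" and d: "d > 0" and k: "k > 0"
    and u: "u = \<rho> *\<^sub>R xi k h - \<rho> *\<^sub>R eta d k i h'"
  shows "norm u = \<rho> * (2 * \<bar>sin (pi * (real_of_int (int h' - int h) + (real i - 1) / real d) / real k)\<bar>)"
proof -
  define A where "A = 2 * pi * (real h - 1) / real k"
  define B where "B = 2 * pi * (real h' - 1) / real k + 2 * pi * (real i - 1) / (real d * real k)"
  have x: "(xi k h :: real^'n::{finite,wellorder}) = cs A" by (simp add: xi_cs A_def)
  have e: "(eta d k i h' :: real^'n::{finite,wellorder}) = cs B" using eta_cs[OF ne refl, of d k i h'] by (simp add: B_def)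
  have "u = \<rho> *\<^sub>R ((cs A :: real^'n::{finite,wellorder}) - cs B)" by (simp add: u x e scaleR_diff_right)
  hence "norm u = \<rho> * norm ((cs A :: real^'n::{finite,wellorder}) - cs B)" using \<rho> by simp
  also have "norm ((cs A :: real^'n::{finite,wellorder}) - cs B) = 2 * \<bar>sin ((A - B) / 2)\<bar>" by (rule cs_dist[OF ne refl])
  also have "(A - B) / 2 = - (pi * (real_of_int (int h' - int h) + (real i - 1) / real d) / real k)"
    using d k by (simp add: A_def B_def field_simps)
  finally show ?thesis by simp
qed

lemma W_le:
  assumes "\<forall>y. U y \<le> C0 * exp (- norm y)"
  shows "Wrho U k \<rho> x \<le> C0 * (\<Sum>h = 1..k. exp (- norm (x - \<rho> *\<^sub>R xi k h)))"
  unfolding Wrho_def sum_distrib_left by (rule sum_mono) (use assms in auto)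

lemma WT_le:
  fixes x :: "real^'n::{finite,wellorder}"
  assumes ne: "(ix1::'n) \<noteq> ix2" and "\<forall>y. U y \<le> C0 * exp (- norm y)"
  shows "Wrho U k \<rho> (ThetaHat d k i x) \<le> C0 * (\<Sum>h = 1..k. exp (- norm (x - \<rho> *\<^sub>R eta d k i h)))"
  unfolding Wrho_def sum_distrib_left
proof (rule sum_mono)
  fix h assume "h \<in> {1..k}"
  have "U (ThetaHat d k i x - \<rho> *\<^sub>R xi k h) \<le> C0 * exp (- norm (ThetaHat d k i x - \<rho> *\<^sub>R xi k h))"
    using assms(2) by blast
  thus "U (ThetaHat d k i x - \<rho> *\<^sub>R xi k h) \<le> C0 * exp (- norm (x - \<rho> *\<^sub>R eta d k i h))"
    by (simp only: Theta_dist[OF ne])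
qed

lemma cross_pt:
  fixes x a b :: "'a::real_normed_vector"
  assumes "0 < \<alpha>" "\<alpha> < 1"
  shows "exp (- norm (x - a)) * exp (- norm (x - b)) \<le> exp (- \<alpha> * norm (x - b)) * exp (- (1 - \<alpha>) * norm (a - b))"
proof -
  have t: "norm (a - b) \<le> norm (x - a) + norm (x - b)"
    using norm_triangle_ineq4[of "x - b" "x - a"] by (simp add: norm_minus_commute)
  have "(1 - \<alpha>) * norm (a - b) \<le> (1 - \<alpha>) * (norm (x - a) + norm (x - b))"
    using assms t by (intro mult_left_mono) auto
  moreover have "(1 - \<alpha>) * norm (x - a) \<le> norm (x - a)"
  proof -
    have "0 \<le> \<alpha> * norm (x - a)" using assms by simp
    thus ?thesis by (simp add: algebra_simps)
  qed
  ultimately have "- norm (x - a) + - norm (x - b) \<le> - \<alpha> * norm (x - b) + - (1 - \<alpha>) * norm (a - b)"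
    by (simp add: algebra_simps)
  thus ?thesis by (simp add: mult_exp_exp)
qed

lemma end_bound:
  fixes c \<rho> w dd kk r2 :: real
  assumes c: "c \<ge> 0" and \<rho>: "\<rho> \<ge> 0" and kk: "kk \<ge> 1" and dd: "dd > 0"
    and w: "1/dd \<le> w" "w \<le> 1" and \<rho>k: "\<rho> \<le> r2 * kk^3"
  shows "exp (-2*c*\<rho> * sin (pi * w/kk)) \<le> exp (c*pi^3*r2/3) * exp (- c * (2*pi*\<rho>/(dd*kk)))"
proof -
  define x where "x = pi * w/kk"
  have s0: "w \<ge> 0" using w dd by (smt (verit) divide_pos_pos)
  have x0: "x \<ge> 0" using s0 kk by (simp add: x_def)
  have sx: "sin x \<ge> x - x^3/6" by (rule sin_cubic[OF x0])
  have x3: "x^3 \<le> pi^3/kk^3"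
  proof -
    have "x \<le> pi/kk" using w kk by (simp add: x_def divide_right_mono)
    hence "x^3 \<le> (pi/kk)^3" using x0 by (intro power_mono) auto
    thus ?thesis by (simp add: power_divide)
  qed
  have "\<rho> * x^3 \<le> \<rho> * (pi^3/kk^3)" using \<rho> x3 by (intro mult_left_mono) auto
  also have "\<dots> \<le> r2 * kk^3 * (pi^3/kk^3)" using \<rho>k kk by (intro mult_right_mono) auto
  also have "\<dots> = r2 * pi^3" using kk by simp
  finally have A: "\<rho> * x^3 \<le> r2 * pi^3" .
  have B: "2*pi*\<rho>/(dd*kk) \<le> 2 * \<rho> * x"
  proof -
    have "1/dd * (pi/kk) \<le> w * (pi/kk)" using w kk by (intro mult_right_mono) auto
    hence "2*\<rho>*(1/dd * (pi/kk)) \<le> 2*\<rho>*(w * (pi/kk))" using \<rho> by (intro mult_left_mono) auto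
    thus ?thesis by (simp add: x_def field_simps)
  qed
  have "2*\<rho>* sin x \<ge> 2*\<rho>*(x - x^3/6)" using \<rho> sx by (intro mult_left_mono) auto
  hence "2*\<rho>* sin x \<ge> 2*pi*\<rho>/(dd*kk) - r2*pi^3/3" using A B by (simp add: algebra_simps)
  hence "c*(2*\<rho>* sin x) \<ge> c*(2*pi*\<rho>/(dd*kk) - r2*pi^3/3)" using c by (intro mult_left_mono) auto
  moreover have "-2*c*\<rho> * sin x = -(c*(2*\<rho> * sin x))" by simp
  moreover have "c*(2*pi*\<rho>/(dd*kk) - r2*pi^3/3) = c * (2*pi*\<rho>/(dd*kk)) - c*pi^3*r2/3"
    by (simp add: algebra_simps)
  moreover have "- c * (2*pi*\<rho>/(dd*kk)) = - (c * (2*pi*\<rho>/(dd*kk)))" by simp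
  ultimately have "-2*c*\<rho> * sin x \<le> c*pi^3*r2/3 + - c * (2*pi*\<rho>/(dd*kk))" by linarith
  hence "exp (-2*c*\<rho> * sin x) \<le> exp (c*pi^3*r2/3 + - c * (2*pi*\<rho>/(dd*kk)))" by simp
  thus ?thesis unfolding x_def exp_add[symmetric] by simp
qed


lemma unif:
  fixes y :: "real^'n::{finite,wellorder}" and d k :: nat
  assumes ne: "(ix1::'n) \<noteq> ix2" and k: "k \<ge> 2" and \<rho>: "\<rho> \<ge> 0" and d: "d > 0"
    and q: "exp (-(1/2)*pi*\<rho>/k) \<le> 1/2"
  shows "(\<Sum>h = 1..k. exp (- norm (y - \<rho> *\<^sub>R xi k h))) \<le> 4"
proof -
  define g where "g h = norm (y - \<rho> *\<^sub>R (xi k h :: real^'n::{finite,wellorder}))" for h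
  have fin: "finite (g ` {1..k})" "g ` {1..k} \<noteq> {}" using k by auto
  obtain mv where mv: "mv \<in> g ` {1..k}" "\<not> (\<exists>z\<in>g ` {1..k}. z < mv)"
    using ex_min_if_finite[OF fin] by blast
  obtain h0 where h0: "h0 \<in> {1..k}" "g h0 = mv" using mv(1) by auto
  have h0min: "g h0 \<le> g h" if "h \<in> {1..k}" for h using mv(2) h0 that by force
  have kp: "k > 0" using k by simp
  have xe: "(xi k h0 :: real^'n::{finite,wellorder}) = eta d k 1 h0"
    using eta_cs[OF ne refl, of d k 1 h0] by (simp add: xi_cs)
  have tm: "exp (- norm (y - \<rho> *\<^sub>R xi k h)) \<le>
      exp (- (1/2) * (\<rho> * (2 * \<bar>sin (pi * (real_of_int (int h0 - int h) + 0) / real k)\<bar>)))"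
    if h: "h \<in> {1..k}" for h
  proof -
    have dd: "norm (\<rho> *\<^sub>R (xi k h :: real^'n::{finite,wellorder}) - \<rho> *\<^sub>R eta d k 1 h0)
       = \<rho> * (2 * \<bar>sin (pi * (real_of_int (int h0 - int h) + (real 1 - 1) / real d) / real k)\<bar>)"
      by (rule dist_xi_eta[OF ne \<rho> d kp refl])
    have "norm (\<rho> *\<^sub>R (xi k h :: real^'n::{finite,wellorder}) - \<rho> *\<^sub>R xi k h0) \<le> g h + g h0"
      unfolding g_def using norm_triangle_ineq4[of "y - \<rho> *\<^sub>R xi k h0" "y - \<rho> *\<^sub>R xi k h"]
      by (simp add: norm_minus_commute)
    also have "\<dots> \<le> 2 * g h" using h0min[OF h] by simp
    finally have "\<rho> * (2 * \<bar>sin (pi * (real_of_int (int h0 - int h) + 0) / real k)\<bar>) \<le> 2 * g h"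
      using dd xe by simp
    hence "- g h \<le> - (1/2) * (\<rho> * (2 * \<bar>sin (pi * (real_of_int (int h0 - int h) + 0) / real k)\<bar>))"
      by simp
    thus ?thesis unfolding g_def by simp
  qed
  have "(\<Sum>h = 1..k. exp (- norm (y - \<rho> *\<^sub>R xi k h))) \<le>
     (\<Sum>h = 1..k. exp (- (1/2) * (\<rho> * (2 * \<bar>sin (pi * (real_of_int (int h0 - int h) + 0) / real k)\<bar>))))"
    by (rule sum_mono) (rule tm)
  also have "\<dots> = (\<Sum>m\<in>{0..<k}. exp (-2*(1/2)*\<rho> * sin (pi*(real m+0)/k)))"
    by (rule per_sum) (use k in auto)
  also have "\<dots> \<le> exp (-2*(1/2)*\<rho> * sin (pi*0/k)) + exp (-2*(1/2)*\<rho> * sin (pi*(1-0)/k)) + 4 * exp (-(1/2)*pi*\<rho>/k)"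
    by (rule sumS) (use k \<rho> q in auto)
  also have "\<dots> \<le> 1 + 1 + 4 * (1/2)"
  proof -
    have "sin (pi*(1-0)/k) \<ge> 0" using kp by (intro sin_ge_zero) (auto simp: field_simps)
    hence E1: "exp (-2*(1/2)*\<rho> * sin (pi*(1-0)/k)) \<le> 1" using \<rho> by simp
    have E0: "exp (-2*(1/2)*\<rho> * sin (pi*0/k)) = 1" by simp
    show ?thesis using E0 E1 q by linarith
  qed
  finally show ?thesis by simp
qed

lemma crossK:
  fixes dummy :: "'n::{finite,wellorder}"
  assumes ne: "(ix1::'n) \<noteq> ix2" and k: "k \<ge> 2" and \<rho>: "\<rho> \<ge> 0" and d: "d \<ge> 2"
    and i: "i \<in> {2..d}" and c: "c \<ge> 0" and q: "exp (-c*pi*\<rho>/k) \<le> 1/2"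
    and \<rho>k: "\<rho> \<le> r2 * real k^3"
  shows "(\<Sum>h = 1..k. exp (- c * norm (\<rho> *\<^sub>R (xi k h :: real^'n::{finite,wellorder}) - \<rho> *\<^sub>R eta d k i h')))
     \<le> (2 * exp (c*pi^3*r2/3) + 4) * exp (- c * (2*pi*\<rho>/(real d*real k)))"
proof -
  define t where "t = (real i - 1) / real d"
  have kp: "k > 0" "real k \<ge> 1" using k by auto
  have dp: "d > 0" "real d > 0" using d by auto
  have t1: "1 / real d \<le> t" "t \<le> 1 - 1 / real d" using i dp by (auto simp: t_def field_simps)
  have "0 \<le> 1 / real d" by simp
  hence t2: "0 \<le> t" "t \<le> 1" using t1 by linarith+
  have t3: "1 / real d \<le> 1 - t" "1 - t \<le> 1" using t1 t2 by auto
  have "(\<Sum>h = 1..k. exp (- c * norm (\<rho> *\<^sub>R (xi k h :: real^'n::{finite,wellorder}) - \<rho> *\<^sub>R eta d k i h')))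
      = (\<Sum>h = 1..k. exp (- c * (\<rho> * (2 * \<bar>sin (pi * (real_of_int (int h' - int h) + t) / real k)\<bar>))))"
    by (intro sum.cong refl) (simp only: dist_xi_eta[OF ne \<rho> dp(1) kp(1) refl] t_def)
  also have "\<dots> = (\<Sum>m\<in>{0..<k}. exp (-2*c*\<rho> * sin (pi*(real m+t)/k)))"
    by (rule per_sum) (use k t2 in auto)
  also have "\<dots> \<le> exp (-2*c*\<rho> * sin (pi*t/k)) + exp (-2*c*\<rho> * sin (pi*(1-t)/k)) + 4 * exp (-c*pi*\<rho>/k)"
    by (rule sumS) (use k t2 c \<rho> q in auto)
  also have "\<dots> \<le> exp (c*pi^3*r2/3) * exp (- c * (2*pi*\<rho>/(real d*real k)))
       + exp (c*pi^3*r2/3) * exp (- c * (2*pi*\<rho>/(real d*real k))) + 4 * exp (- c * (2*pi*\<rho>/(real d*real k)))"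
  proof -
    have e1: "exp (-2*c*\<rho> * sin (pi*t/k)) \<le> exp (c*pi^3*r2/3) * exp (- c * (2*pi*\<rho>/(real d*real k)))"
      by (rule end_bound) (use c \<rho> kp dp t1 t2 \<rho>k in auto)
    have e2: "exp (-2*c*\<rho> * sin (pi*(1-t)/k)) \<le> exp (c*pi^3*r2/3) * exp (- c * (2*pi*\<rho>/(real d*real k)))"
      by (rule end_bound) (use c \<rho> kp dp t3 \<rho>k in auto)
    have "2*pi*\<rho>/(real d*real k) \<le> pi*\<rho>/real k"
    proof -
      have "2 / real d \<le> 1" using d by simp
      hence "(2 / real d) * (pi*\<rho>/real k) \<le> 1 * (pi*\<rho>/real k)" using \<rho> kp by (intro mult_right_mono) auto
      thus ?thesis by (simp add: field_simps)
    qed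
    hence A: "c * (2*pi*\<rho>/(real d*real k)) \<le> c * (pi*\<rho>/real k)" using c by (rule mult_left_mono)
    have B: "-c*pi*\<rho>/real k = - (c * (pi*\<rho>/real k))" by simp
    have "-c*pi*\<rho>/real k \<le> - c * (2*pi*\<rho>/(real d*real k))" using A B by linarith
    hence e3: "exp (-c*pi*\<rho>/k) \<le> exp (- c * (2*pi*\<rho>/(real d*real k)))" by simp
    show ?thesis using e1 e2 e3 by linarith
  qed
  also have "\<dots> = (2 * exp (c*pi^3*r2/3) + 4) * exp (- c * (2*pi*\<rho>/(real d*real k)))"
    by (simp add: algebra_simps)
  finally show ?thesis .
qed


lemma W_nonneg: "\<forall>y. U y > 0 \<Longrightarrow> Wrho U k \<rho> x \<ge> 0"
  unfolding Wrho_def by (intro sum_nonneg) (auto intro: less_imp_le)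

lemma pairW:
  fixes x :: "real^'n::{finite,wellorder}"
  assumes ne: "(ix1::'n) \<noteq> ix2" and C0: "\<forall>y. U y \<le> C0 * exp (- norm y)" and pos: "\<forall>y. U y > 0"
    and \<alpha>: "0 < \<alpha>" "\<alpha> < 1" and k: "k \<ge> 2" and \<rho>: "\<rho> \<ge> 0" and d: "d \<ge> 2" and i: "i \<in> {2..d}"
    and q: "exp (-(1-\<alpha>)*pi*\<rho>/k) \<le> 1/2" and \<rho>k: "\<rho> \<le> r2 * real k^3"
  shows "Wrho U k \<rho> x * Wrho U k \<rho> (ThetaHat d k i x) \<le>
    C0\<^sup>2 * ((2 * exp ((1-\<alpha>)*pi^3*r2/3) + 4) * exp (- (1-\<alpha>) * (2*pi*\<rho>/(real d*real k))))
      * (\<Sum>j = 1..k. exp (- \<alpha> * norm (x - \<rho> *\<^sub>R eta d k i j)))"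
proof -
  define Ke where "Ke = (2 * exp ((1-\<alpha>)*pi^3*r2/3) + 4) * exp (- (1-\<alpha>) * (2*pi*\<rho>/(real d*real k)))"
  define A where "A = (\<Sum>h = 1..k. exp (- norm (x - \<rho> *\<^sub>R xi k h)))"
  define B where "B = (\<Sum>j = 1..k. exp (- norm (x - \<rho> *\<^sub>R eta d k i j)))"
  have W1: "Wrho U k \<rho> x \<le> C0 * A" unfolding A_def by (rule W_le[OF C0])
  have W2: "Wrho U k \<rho> (ThetaHat d k i x) \<le> C0 * B" unfolding B_def by (rule WT_le[OF ne C0])
  have W0: "Wrho U k \<rho> x \<ge> 0" "Wrho U k \<rho> (ThetaHat d k i x) \<ge> 0" using W_nonneg[OF pos] by auto
  have "Wrho U k \<rho> x * Wrho U k \<rho> (ThetaHat d k i x) \<le> (C0 * A) * (C0 * B)"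
    using W1 W2 W0 by (intro mult_mono) auto
  also have "\<dots> = C0\<^sup>2 * (A * B)" by (simp add: power2_eq_square mult_ac)
  also have "A * B \<le> Ke * (\<Sum>j = 1..k. exp (- \<alpha> * norm (x - \<rho> *\<^sub>R eta d k i j)))"
  proof -
    have "A * B = (\<Sum>h = 1..k. \<Sum>j = 1..k. exp (- norm (x - \<rho> *\<^sub>R xi k h)) * exp (- norm (x - \<rho> *\<^sub>R eta d k i j)))"
      unfolding A_def B_def by (rule sum_product)
    also have "\<dots> \<le> (\<Sum>h = 1..k. \<Sum>j = 1..k. exp (- \<alpha> * norm (x - \<rho> *\<^sub>R eta d k i j))
                  * exp (- (1-\<alpha>) * norm (\<rho> *\<^sub>R (xi k h :: real^'n::{finite,wellorder}) - \<rho> *\<^sub>R eta d k i j)))"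
    proof (intro sum_mono)
      fix h j
      show "exp (- norm (x - \<rho> *\<^sub>R xi k h)) * exp (- norm (x - \<rho> *\<^sub>R eta d k i j))
              \<le> exp (- \<alpha> * norm (x - \<rho> *\<^sub>R eta d k i j)) * exp (- (1 - \<alpha>) * norm (\<rho> *\<^sub>R (xi k h :: real^'n::{finite,wellorder}) - \<rho> *\<^sub>R eta d k i j))"
        by (rule cross_pt[OF \<alpha>])
    qed
    also have "\<dots> = (\<Sum>j = 1..k. exp (- \<alpha> * norm (x - \<rho> *\<^sub>R eta d k i j))
                  * (\<Sum>h = 1..k. exp (- (1-\<alpha>) * norm (\<rho> *\<^sub>R (xi k h :: real^'n::{finite,wellorder}) - \<rho> *\<^sub>R eta d k i j))))"
      by (subst sum.swap) (simp add: sum_distrib_left)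
    also have "\<dots> \<le> (\<Sum>j = 1..k. exp (- \<alpha> * norm (x - \<rho> *\<^sub>R eta d k i j)) * Ke)"
    proof (rule sum_mono)
      fix j assume "j \<in> {1..k}"
      have "(\<Sum>h = 1..k. exp (- (1-\<alpha>) * norm (\<rho> *\<^sub>R (xi k h :: real^'n::{finite,wellorder}) - \<rho> *\<^sub>R eta d k i j))) \<le> Ke"
        unfolding Ke_def by (rule crossK[OF ne k \<rho> d i _ q \<rho>k]) (use \<alpha> in simp)
      thus "exp (- \<alpha> * norm (x - \<rho> *\<^sub>R eta d k i j))
             * (\<Sum>h = 1..k. exp (- (1-\<alpha>) * norm (\<rho> *\<^sub>R (xi k h :: real^'n::{finite,wellorder}) - \<rho> *\<^sub>R eta d k i j)))
           \<le> exp (- \<alpha> * norm (x - \<rho> *\<^sub>R eta d k i j)) * Ke"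
        by (intro mult_left_mono) auto
    qed
    also have "\<dots> = Ke * (\<Sum>j = 1..k. exp (- \<alpha> * norm (x - \<rho> *\<^sub>R eta d k i j)))"
      by (simp add: sum_distrib_left mult_ac)
    finally show ?thesis .
  qed
  hence "C0\<^sup>2 * (A * B) \<le> C0\<^sup>2 * (Ke * (\<Sum>j = 1..k. exp (- \<alpha> * norm (x - \<rho> *\<^sub>R eta d k i j))))"
    by (intro mult_left_mono) auto
  finally show ?thesis by (simp add: Ke_def mult_ac)
qed


theorem lemma2p4:
  fixes U :: "real^'n::{finite,wellorder} \<Rightarrow> real"
    and d :: nat and \<alpha> r1 r2 :: real
  assumes "CARD('n) \<in> {2, 3}"
    and "d \<ge> 2"
    and "0 < \<alpha>" "\<alpha> < 1"
    and "0 < r1" "r1 < r2"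
    and "ground_state U"
  shows "\<exists>C > 0. \<exists>k0 :: nat. \<forall>k \<ge> k0. \<forall>\<rho> \<in> Dk r1 r2 k.
     star_norm d k \<alpha> \<rho> (\<lambda>x. Wrho U k \<rho> x * (\<Sum>i = 2..d. (Wrho U k \<rho> (ThetaHat d k i x))\<^sup>2))
       \<le> ereal (C * exp (- (1 - \<alpha>) * (2 * pi * \<rho> / (real d * real k)))) \<and>
     star_norm d k \<alpha> \<rho> (\<lambda>x. Wrho U k \<rho> x * (\<Sum>i = 2..d. Wrho U k \<rho> (ThetaHat d k i x)))
       \<le> ereal (C * exp (- (1 - \<alpha>) * (2 * pi * \<rho> / (real d * real k))))"
proof -
  note card = assms(1) and d = assms(2) and \<alpha> = assms(3,4) and r = assms(5,6) and gs = assms(7)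
  have c2: "CARD('n) \<ge> 2" using card by auto
  have ne: "(ix1::'n) \<noteq> ix2" by (rule ix12[OF c2])
  have dim: "DIM(real^'n::{finite,wellorder}) \<ge> 2" using card by auto
  obtain C0 where C0: "\<forall>y. U y \<le> C0 * exp (- norm y)" using decay[OF gs dim] by blast
  have pos: "\<forall>y. U y > 0" using gs unfolding ground_state_def by blast
  have C0p: "C0 > 0" using C0 pos[rule_format, of 0] by (smt (verit) exp_zero mult_cancel_left1 norm_zero)
  define c1 where "c1 = 1 - \<alpha>"
  have c1: "c1 > 0" "c1 \<le> 1" using \<alpha> by (auto simp: c1_def)
  define K where "K = 2 * exp (c1*pi^3*r2/3) + 4"
  have Kp: "K > 0" by (simp add: K_def add_pos_pos)
  define C where "C = C0\<^sup>2 * K * (4 * C0 + 1)"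
  have Cp: "C > 0" using C0p Kp by (simp add: C_def)
  define k0 where "k0 = nat \<lceil>exp (2 / (c1 * pi * r1))\<rceil> + 2"
  show ?thesis
  proof (intro exI[of _ C] conjI Cp exI[of _ k0] allI impI ballI)
    fix k :: nat and \<rho> :: real
    assume kk0: "k \<ge> k0" and \<rho>D: "\<rho> \<in> Dk r1 r2 k"
    have k2: "k \<ge> 2" using kk0 by (simp add: k0_def)
    have kp: "real k > 0" "real k \<ge> 1" using k2 by auto
    have kexp: "real k \<ge> exp (2 / (c1 * pi * r1))"
    proof -
      have "exp (2 / (c1 * pi * r1)) \<le> real (nat \<lceil>exp (2 / (c1 * pi * r1))\<rceil>)" by linarith
      also have "\<dots> \<le> real k" using kk0 by (simp add: k0_def)
      finally show ?thesis .
    qed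
    have lnk: "ln (real k) \<ge> 2 / (c1 * pi * r1)" using kexp kp by (metis exp_le_cancel_iff exp_ln)
    have lnk0: "ln (real k) \<ge> 0" using kp by simp
    have \<rho>1: "r1 * real k * ln (real k) \<le> \<rho>" "\<rho> \<le> r2 * real k * ln (real k)"
      using \<rho>D by (auto simp: Dk_def)
    have \<rho>0: "\<rho> \<ge> 0" using \<rho>1 r kp lnk0 by (smt (verit) mult_nonneg_nonneg)
    have \<rho>k: "\<rho> \<le> r2 * real k^3"
    proof -
      have "ln (real k) \<le> real k - 1" using kp by (intro ln_le_minus_one) auto
      hence "ln (real k) \<le> real k * real k" using kp by (smt (verit) mult_left_mono mult_cancel_left1)
      hence "r2 * real k * ln (real k) \<le> r2 * real k * (real k * real k)"
        using r kp by (intro mult_left_mono) auto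
      thus ?thesis using \<rho>1 by (simp add: power3_eq_cube mult_ac)
    qed
    have \<rho>ratio: "\<rho> / real k \<ge> r1 * ln (real k)" using \<rho>1 kp by (simp add: field_simps)
    have big: "c1 * pi * \<rho> / real k \<ge> 2"
    proof -
      define P where "P = c1 * pi * r1"
      have P0: "P > 0" using c1 r by (simp add: P_def)
      have "P * (2 / P) \<le> P * ln (real k)" using lnk P0 unfolding P_def[symmetric] by (intro mult_left_mono) auto
      moreover have "P * (2 / P) = 2" using P0 by simp
      moreover have "c1 * pi * (r1 * ln (real k)) = P * ln (real k)" by (simp add: P_def mult_ac)
      ultimately have "c1 * pi * (r1 * ln (real k)) \<ge> 2" by linarith
      moreover have "c1 * pi * (\<rho> / real k) \<ge> c1 * pi * (r1 * ln (real k))"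
        using \<rho>ratio c1 by (intro mult_left_mono) auto
      ultimately show ?thesis by simp
    qed
    have e2: "exp (- (2::real)) \<le> 1/2"
    proof -
      have "exp (2::real) \<ge> 2" using exp_ge_add_one_self[of 2] by simp
      thus ?thesis by (simp add: exp_minus field_simps)
    qed
    have q1: "exp (-(1-\<alpha>)*pi*\<rho>/k) \<le> 1/2"
    proof -
      have "-(1-\<alpha>)*pi*\<rho>/k = - (c1 * pi * \<rho> / real k)" using kp by (simp add: c1_def field_simps)
      hence "exp (-(1-\<alpha>)*pi*\<rho>/k) \<le> exp (- 2)" using big by simp
      thus ?thesis using e2 by linarith
    qed
    have q2: "exp (-(1/2)*pi*\<rho>/k) \<le> 1/2"
    proof -
      have "c1 * pi * \<rho> / real k \<le> 2 * ((1/2)*pi*\<rho>/k)"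
      proof -
        have "c1 * (pi * \<rho> / real k) \<le> 1 * (pi * \<rho> / real k)" using c1 \<rho>0 kp by (intro mult_right_mono) auto
        thus ?thesis by simp
      qed
      hence "(1/2)*pi*\<rho>/k \<ge> 1" using big by simp
      hence "exp (-(1/2)*pi*\<rho>/k) \<le> exp (-1)" by simp
      moreover have "exp (-1::real) \<le> 1/2"
      proof -
        have "exp (1::real) \<ge> 2" using exp_ge_add_one_self[of 1] by simp
        thus ?thesis by (simp add: exp_minus field_simps)
      qed
      ultimately show ?thesis by linarith
    qed
    define ex where "ex = exp (- (1 - \<alpha>) * (2 * pi * \<rho> / (real d * real k)))"
    have exp0: "ex > 0" by (simp add: ex_def)
    define E where "E x = (\<Sum>i = 1..d. \<Sum>j = 1..k. exp (- \<alpha> * norm (x - \<rho> *\<^sub>R eta d k i j)))" for x :: "real^'n::{finite,wellorder}"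
    have Epos: "E x > 0" for x
      unfolding E_def using d k2 by (intro sum_pos) auto
    have Wb: "Wrho U k \<rho> y \<le> 4 * C0" for y
    proof -
      have "Wrho U k \<rho> y \<le> C0 * (\<Sum>h = 1..k. exp (- norm (y - \<rho> *\<^sub>R xi k h)))" by (rule W_le[OF C0])
      also have "\<dots> \<le> C0 * 4" using C0p by (intro mult_left_mono unif[OF ne k2 \<rho>0 _ q2]) (use d in auto)
      finally show ?thesis by simp
    qed
    have W0: "Wrho U k \<rho> y \<ge> 0" for y by (rule W_nonneg[OF pos])
    have pairs: "(\<Sum>i = 2..d. Wrho U k \<rho> x * Wrho U k \<rho> (ThetaHat d k i x)) \<le> C0\<^sup>2 * K * ex * E x" for x
    proof -
      have "(\<Sum>i = 2..d. Wrho U k \<rho> x * Wrho U k \<rho> (ThetaHat d k i x))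
          \<le> (\<Sum>i = 2..d. C0\<^sup>2 * (K * ex) * (\<Sum>j = 1..k. exp (- \<alpha> * norm (x - \<rho> *\<^sub>R eta d k i j))))"
      proof (rule sum_mono)
        fix i assume i: "i \<in> {2..d}"
        show "Wrho U k \<rho> x * Wrho U k \<rho> (ThetaHat d k i x) \<le> C0\<^sup>2 * (K * ex) * (\<Sum>j = 1..k. exp (- \<alpha> * norm (x - \<rho> *\<^sub>R eta d k i j)))"
          using pairW[OF ne C0 pos \<alpha> k2 \<rho>0 d i q1 \<rho>k] by (simp add: K_def ex_def c1_def)
      qed
      also have "\<dots> = C0\<^sup>2 * (K * ex) * (\<Sum>i = 2..d. \<Sum>j = 1..k. exp (- \<alpha> * norm (x - \<rho> *\<^sub>R eta d k i j)))"
        by (simp add: sum_distrib_left)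
      also have "(\<Sum>i = 2..d. \<Sum>j = 1..k. exp (- \<alpha> * norm (x - \<rho> *\<^sub>R eta d k i j))) \<le> E x"
        unfolding E_def by (rule sum_mono2) (auto intro: sum_nonneg)
      hence "C0\<^sup>2 * (K * ex) * (\<Sum>i = 2..d. \<Sum>j = 1..k. exp (- \<alpha> * norm (x - \<rho> *\<^sub>R eta d k i j))) \<le> C0\<^sup>2 * (K * ex) * E x"
        using Kp exp0 by (intro mult_left_mono) auto
      finally show ?thesis by (simp add: mult_ac)
    qed
    have f1: "\<bar>Wrho U k \<rho> x * (\<Sum>i = 2..d. (Wrho U k \<rho> (ThetaHat d k i x))\<^sup>2)\<bar> \<le> C * ex * E x" for x
    proof -
      have nn: "0 \<le> Wrho U k \<rho> x * (\<Sum>i = 2..d. (Wrho U k \<rho> (ThetaHat d k i x))\<^sup>2)"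
        using W0 by (intro mult_nonneg_nonneg sum_nonneg) auto
      have "Wrho U k \<rho> x * (\<Sum>i = 2..d. (Wrho U k \<rho> (ThetaHat d k i x))\<^sup>2)
           = (\<Sum>i = 2..d. (Wrho U k \<rho> x * Wrho U k \<rho> (ThetaHat d k i x)) * Wrho U k \<rho> (ThetaHat d k i x))"
        by (simp add: sum_distrib_left power2_eq_square mult_ac)
      also have "\<dots> \<le> (\<Sum>i = 2..d. (Wrho U k \<rho> x * Wrho U k \<rho> (ThetaHat d k i x)) * (4 * C0))"
        using W0 Wb by (intro sum_mono mult_left_mono mult_nonneg_nonneg) auto
      also have "\<dots> = 4 * C0 * (\<Sum>i = 2..d. Wrho U k \<rho> x * Wrho U k \<rho> (ThetaHat d k i x))"
        by (simp add: sum_distrib_left mult_ac)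
      also have "\<dots> \<le> 4 * C0 * (C0\<^sup>2 * K * ex * E x)"
        using pairs C0p by (intro mult_left_mono) auto
      also have "\<dots> \<le> C * ex * E x"
      proof -
        have "0 \<le> C0\<^sup>2 * K * ex * E x" using Kp exp0 Epos[of x] by simp
        hence "4 * C0 * (C0\<^sup>2 * K * ex * E x) \<le> (4 * C0 + 1) * (C0\<^sup>2 * K * ex * E x)" by (intro mult_right_mono) auto
        thus ?thesis by (simp add: C_def mult_ac)
      qed
      finally show ?thesis using nn by simp
    qed
    have f2: "\<bar>Wrho U k \<rho> x * (\<Sum>i = 2..d. Wrho U k \<rho> (ThetaHat d k i x))\<bar> \<le> C * ex * E x" for x
    proof -
      have nn: "0 \<le> Wrho U k \<rho> x * (\<Sum>i = 2..d. Wrho U k \<rho> (ThetaHat d k i x))"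
        using W0 by (intro mult_nonneg_nonneg sum_nonneg) auto
      have "Wrho U k \<rho> x * (\<Sum>i = 2..d. Wrho U k \<rho> (ThetaHat d k i x))
          = (\<Sum>i = 2..d. Wrho U k \<rho> x * Wrho U k \<rho> (ThetaHat d k i x))"
        by (simp add: sum_distrib_left)
      also have "\<dots> \<le> C0\<^sup>2 * K * ex * E x" by (rule pairs)
      also have "\<dots> \<le> C * ex * E x"
      proof -
        have "0 \<le> C0\<^sup>2 * K * ex * E x" using Kp exp0 Epos[of x] by simp
        hence "1 * (C0\<^sup>2 * K * ex * E x) \<le> (4 * C0 + 1) * (C0\<^sup>2 * K * ex * E x)"
          using C0p by (intro mult_right_mono) auto
        thus ?thesis by (simp add: C_def mult_ac)
      qed
      finally show ?thesis using nn by simp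
    qed
    have sn: "star_norm d k \<alpha> \<rho> f \<le> ereal (C * ex)" if hf: "\<And>x. \<bar>f x\<bar> \<le> C * ex * E x" for f
      unfolding star_norm_def
    proof (rule SUP_least)
      fix x :: "real^'n::{finite,wellorder}"
      have "\<bar>f x\<bar> / E x \<le> C * ex" using hf[of x] Epos[of x] by (simp add: divide_le_eq)
      thus "ereal (\<bar>f x\<bar> / (\<Sum>i = 1..d. \<Sum>j = 1..k. exp (- \<alpha> * norm (x - \<rho> *\<^sub>R eta d k i j)))) \<le> ereal (C * ex)"
        by (simp add: E_def)
    qed
    show "star_norm d k \<alpha> \<rho> (\<lambda>x. Wrho U k \<rho> x * (\<Sum>i = 2..d. (Wrho U k \<rho> (ThetaHat d k i x))\<^sup>2))
       \<le> ereal (C * exp (- (1 - \<alpha>) * (2 * pi * \<rho> / (real d * real k))))"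
      using sn[OF f1] by (simp add: ex_def)
    show "star_norm d k \<alpha> \<rho> (\<lambda>x. Wrho U k \<rho> x * (\<Sum>i = 2..d. Wrho U k \<rho> (ThetaHat d k i x)))
       \<le> ereal (C * exp (- (1 - \<alpha>) * (2 * pi * \<rho> / (real d * real k))))"
      using sn[OF f2] by (simp add: ex_def)
  qed
qed


end
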